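(* Let $k$ be a positive integer. For all $A,B\in R_k$ we have $\operatorname{T}_k(AB)=\operatorname{T}_k(BA)$ in $\mathbb{Z}/k\mathbb{Z}$.
   Context: $\mathbb{N}=\{1,2,3,\dots\}$. $R$ denotes the ring of all $\mathbb{N}\times\mathbb{N}$ integer matrices with only finitely many nonzero entries in each row and each column, with entrywise addition and multiplication $(AB)_{i,j}=\sum_{l\ge1}a_{i,l}b_{l,j}$. Fix a positive integer $k$. Partition $\mathbb{N}$ into consecutive blocks $J_1=\{1\}$ and, for $m\ge2$, $J_m=\{2+k(m-2),\dots,1+k(m-1)\}$. For $A\in R$, the block $A^{m,n}$ is the submatrix with rows indexed by $J_m$ and columns by $J_n$. $R_k$ is the subring of $A\in R$ such that for all but finitely many pairs $(m,n)$ with $m,n\ge2$, $A^{m,n}=cI_k$ for some integer $c$. For a finite square integer matrix $M$, $\operatorname{t}_k(M)\in\mathbb{Z}/k\mathbb{Z}$ is the residue class of the sum of its diagonal entries. For $A\in R_k$, $\operatorname{T}_k(A)=\sum_{n\ge1}\operatorname{t}_k(A^{n,n})\in\mathbb{Z}/k\mathbb{Z}$ (a finite sum, since $\operatorname{t}_k(cI_k)=0$). *)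

theory Defs
  imports Main
begin

text \<open>Infinite integer matrices indexed by positive naturals, represented as
  functions nat => nat => int; entries with a zero index are ignored.\<close>

type_synonym imat = "nat \<Rightarrow> nat \<Rightarrow> int"

definition row_col_finite :: "imat \<Rightarrow> bool" where
  "row_col_finite A \<longleftrightarrow>
     (\<forall>i\<ge>1. finite {j. j \<ge> 1 \<and> A i j \<noteq> 0}) \<and>
     (\<forall>j\<ge>1. finite {i. i \<ge> 1 \<and> A i j \<noteq> 0})"

definition imat_mult :: "imat \<Rightarrow> imat \<Rightarrow> imat" where
  "imat_mult A B = (\<lambda>i j. \<Sum>l\<in>{l. l \<ge> 1 \<and> A i l \<noteq> 0}. A i l * B l j)"

definition blk :: "nat \<Rightarrow> nat \<Rightarrow> nat set" where
  "blk k m = (if m = 1 then {1} else {2 + k*(m-2) .. 1 + k*(m-1)})"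

definition block_scalar :: "nat \<Rightarrow> imat \<Rightarrow> nat \<Rightarrow> nat \<Rightarrow> bool" where
  "block_scalar k A m n \<longleftrightarrow>
     (\<exists>c::int. \<forall>a<k. \<forall>b<k.
        A (2 + k*(m-2) + a) (2 + k*(n-2) + b) = (if a = b then c else 0))"

definition Rk :: "nat \<Rightarrow> imat set" where
  "Rk k = {A. row_col_finite A \<and>
              finite {(m,n). m \<ge> 2 \<and> n \<ge> 2 \<and> \<not> block_scalar k A m n}}"

definition block_trace :: "nat \<Rightarrow> imat \<Rightarrow> nat \<Rightarrow> int" where
  "block_trace k A n = (\<Sum>i\<in>blk k n. A i i)"

text \<open>T_k(A) = sum over n >= 1 of t_k(A^{n,n}), as an element of Z/kZ represented
  by its least nonnegative residue mod k; only the (finitely many) blocks with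
  nonzero residue contribute.\<close>

definition Tk :: "nat \<Rightarrow> imat \<Rightarrow> int" where
  "Tk k A = (\<Sum>n\<in>{n. n \<ge> 1 \<and> block_trace k A n mod int k \<noteq> 0}. block_trace k A n) mod int k"

end

theory Submission
  imports Defs
begin

definition Cb :: "nat \<Rightarrow> imat \<Rightarrow> imat \<Rightarrow> nat \<Rightarrow> nat \<Rightarrow> int" where
  "Cb k A B n m = (\<Sum>i\<in>blk k n. \<Sum>l\<in>blk k m. A i l * B l i)"

lemma Cb_swap: "Cb k A B n m = Cb k B A m n"
  unfolding Cb_def by (subst sum.swap) (simp add: mult.commute)

lemma blk_finite: "finite (blk k m)"
  by (simp add: blk_def)

lemma blk_ge1: "i \<in> blk k m \<Longrightarrow> i \<ge> 1"
  by (auto simp: blk_def split: if_splits)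

lemma blk_decomp:
  "(\<Sum>l\<in>{1..1+k*M}. f l) = (\<Sum>m\<in>{1..Suc M}. \<Sum>l\<in>blk k m. f l)"
proof (induction M)
  case 0
  then show ?case by (simp add: blk_def)
next
  case (Suc M)
  have b: "blk k (Suc (Suc M)) = {2+k*M..1+k*Suc M}" by (simp add: blk_def)
  have e: "{1..1+k*Suc M} = {1..1+k*M} \<union> blk k (Suc (Suc M))"
    unfolding b by auto
  have d: "{1..1+k*M} \<inter> blk k (Suc (Suc M)) = {}"
    unfolding b by auto
  have "(\<Sum>l\<in>{1..1+k*Suc M}. f l) = (\<Sum>l\<in>{1..1+k*M}. f l) + (\<Sum>l\<in>blk k (Suc (Suc M)). f l)"
    unfolding e using d by (intro sum.union_disjoint) (simp_all add: blk_finite)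
  then show ?case using Suc by simp
qed

lemma blk_shift:
  assumes "n \<ge> 2"
  shows "(\<Sum>i\<in>blk k n. f i) = (\<Sum>a<k. f (2 + k*(n-2) + a))"
proof -
  have "blk k n = {0 + (2 + k*(n-2))..<k + (2 + k*(n-2))}"
    using assms by (cases n) (auto simp: blk_def, (cases "n-1"; simp add: algebra_simps)+)
  then show ?thesis
    by (simp only: sum.shift_bounds_nat_ivl) (simp add: lessThan_atLeast0 add.commute)
qed

lemma Cb_scalar:
  assumes "n \<ge> 2" "m \<ge> 2" "block_scalar k A n m" "block_scalar k B m n"
  shows "int k dvd Cb k A B n m"
proof -
  obtain c where c: "\<forall>a<k. \<forall>b<k. A (2 + k*(n-2) + a) (2 + k*(m-2) + b) = (if a = b then c else 0)"
    using assms(3) unfolding block_scalar_def by blast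
  obtain d where d: "\<forall>a<k. \<forall>b<k. B (2 + k*(m-2) + a) (2 + k*(n-2) + b) = (if a = b then d else 0)"
    using assms(4) unfolding block_scalar_def by blast
  have "Cb k A B n m = (\<Sum>a<k. \<Sum>b<k. A (2 + k*(n-2) + a) (2 + k*(m-2) + b) * B (2 + k*(m-2) + b) (2 + k*(n-2) + a))"
    unfolding Cb_def using assms by (simp add: blk_shift)
  also have "\<dots> = (\<Sum>a<k. \<Sum>b<k. (if a = b then c * d else 0))"
    using c d by (intro sum.cong refl) auto
  also have "\<dots> = int k * (c * d)"
    by (simp add: sum.delta)
  finally show ?thesis by simp
qed

definition good :: "nat \<Rightarrow> imat \<Rightarrow> nat \<Rightarrow> bool" where
  "good k A N \<longleftrightarrow> N \<ge> 1 \<and>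
     (\<forall>m n. m \<ge> 2 \<and> n \<ge> 2 \<and> \<not> block_scalar k A m n \<longrightarrow> m \<le> N \<and> n \<le> N) \<and>
     (\<forall>l. l > 1 + k*(N-1) \<longrightarrow> A 1 l = 0 \<and> A l 1 = 0)"

lemma good_mono:
  assumes "good k A N" "N \<le> N'" shows "good k A N'"
proof -
  have "N-1 \<le> N'-1" using assms(2) by simp
  then have "1 + k*(N-1) \<le> 1 + k*(N'-1)" by simp
  have a: "N' \<ge> 1" using assms unfolding good_def by simp
  have b: "\<forall>m n. m \<ge> 2 \<and> n \<ge> 2 \<and> \<not> block_scalar k A m n \<longrightarrow> m \<le> N' \<and> n \<le> N'"
  proof (intro allI impI)
    fix m n assume h: "m \<ge> 2 \<and> n \<ge> 2 \<and> \<not> block_scalar k A m n"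
    have "\<forall>m n. m \<ge> 2 \<and> n \<ge> 2 \<and> \<not> block_scalar k A m n \<longrightarrow> m \<le> N \<and> n \<le> N"
      using assms(1) unfolding good_def by blast
    then have "m \<le> N \<and> n \<le> N" using h by blast
    then show "m \<le> N' \<and> n \<le> N'" using assms(2) by simp
  qed
  have c: "\<forall>l. l > 1 + k*(N'-1) \<longrightarrow> A 1 l = 0 \<and> A l 1 = 0"
  proof (intro allI impI)
    fix l assume "l > 1 + k*(N'-1)"
    then have "l > 1 + k*(N-1)" using \<open>1 + k*(N-1) \<le> 1 + k*(N'-1)\<close> by linarith
    moreover have "\<forall>l. l > 1 + k*(N-1) \<longrightarrow> A 1 l = 0 \<and> A l 1 = 0"
      using assms(1) unfolding good_def by blast
    ultimately show "A 1 l = 0 \<and> A l 1 = 0" by blast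
  qed
  show ?thesis unfolding good_def using a b c by blast
qed

lemma good_ex:
  assumes "k \<ge> 1" "A \<in> Rk k" shows "\<exists>N. good k A N"
proof -
  let ?Bad = "{(m,n). m \<ge> 2 \<and> n \<ge> 2 \<and> \<not> block_scalar k A m n}"
  have fb: "finite ?Bad" using assms(2) by (simp add: Rk_def)
  have rc: "row_col_finite A" using assms(2) by (simp add: Rk_def)
  have f1: "finite {j. j \<ge> 1 \<and> A 1 j \<noteq> 0}" "finite {i. i \<ge> 1 \<and> A i 1 \<noteq> 0}"
    using rc unfolding row_col_finite_def by auto
  obtain B1 where B1: "\<forall>p\<in>?Bad. fst p \<le> B1 \<and> snd p \<le> B1"
  proof -
    have "finite (fst ` ?Bad \<union> snd ` ?Bad)" using fb by simp
    then obtain b where "\<forall>x\<in>fst ` ?Bad \<union> snd ` ?Bad. x \<le> b"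
      using finite_nat_set_iff_bounded_le by blast
    then show ?thesis using that by blast
  qed
  obtain B2 where B2: "\<forall>x\<in>{j. j \<ge> 1 \<and> A 1 j \<noteq> 0} \<union> {i. i \<ge> 1 \<and> A i 1 \<noteq> 0}. x \<le> B2"
    using f1 finite_nat_set_iff_bounded_le[of "{j. j \<ge> 1 \<and> A 1 j \<noteq> 0} \<union> {i. i \<ge> 1 \<and> A i 1 \<noteq> 0}"] by auto
  define N where "N = B1 + B2 + 1"
  have g1: "\<forall>m n. m \<ge> 2 \<and> n \<ge> 2 \<and> \<not> block_scalar k A m n \<longrightarrow> m \<le> N \<and> n \<le> N"
  proof (intro allI impI)
    fix m n assume "2 \<le> m \<and> 2 \<le> n \<and> \<not> block_scalar k A m n"
    then have "(m,n) \<in> ?Bad" by simp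
    then have "m \<le> B1 \<and> n \<le> B1" using B1 by fastforce
    then show "m \<le> N \<and> n \<le> N" unfolding N_def by simp
  qed
  have g2: "\<forall>l. l > 1 + k*(N-1) \<longrightarrow> A 1 l = 0 \<and> A l 1 = 0"
  proof (intro allI impI)
    fix l assume l: "1 + k*(N-1) < l"
    have "1 * (N - 1) \<le> k*(N-1)" using assms(1) by (rule mult_le_mono1)
    moreover have "B2 \<le> N - 1" by (simp add: N_def)
    ultimately have lB: "l > B2" using l by linarith
    have "A 1 l = 0"
    proof (rule ccontr)
      assume "A 1 l \<noteq> 0" then have "l \<le> B2" using B2 l by auto
      then show False using lB by simp
    qed
    moreover have "A l 1 = 0"
    proof (rule ccontr)
      assume "A l 1 \<noteq> 0" then have "l \<le> B2" using B2 l by auto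
      then show False using lB by simp
    qed
    ultimately show "A 1 l = 0 \<and> A l 1 = 0" by simp
  qed
  have "good k A N" unfolding good_def using g1 g2 by (simp add: N_def)
  then show ?thesis by blast
qed

lemma bt_expand:
  assumes "row_col_finite A" "k \<ge> 1"
  shows "\<exists>M0. \<forall>M\<ge>M0. block_trace k (imat_mult A B) n = (\<Sum>m\<in>{1..Suc M}. Cb k A B n m)"
proof -
  let ?F = "\<Union>i\<in>blk k n. {l. l \<ge> 1 \<and> A i l \<noteq> 0}"
  have "finite ?F" using assms blk_finite blk_ge1 unfolding row_col_finite_def by blast
  then obtain M0 where M0: "\<forall>x\<in>?F. x \<le> M0" using finite_nat_set_iff_bounded_le by blast
  have "\<forall>M\<ge>M0. block_trace k (imat_mult A B) n = (\<Sum>m\<in>{1..Suc M}. Cb k A B n m)"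
  proof (intro allI impI)
    fix M assume M: "M \<ge> M0"
    have "block_trace k (imat_mult A B) n = (\<Sum>i\<in>blk k n. \<Sum>l\<in>{1..1+M}. A i l * B l i)"
      unfolding block_trace_def imat_mult_def
    proof (rule sum.cong[OF refl])
      fix i assume i: "i \<in> blk k n"
      show "(\<Sum>l | 1 \<le> l \<and> A i l \<noteq> 0. A i l * B l i) = (\<Sum>l\<in>{1..1+M}. A i l * B l i)"
      proof (rule sum.mono_neutral_left)
        show "{l. 1 \<le> l \<and> A i l \<noteq> 0} \<subseteq> {1..1+M}"
        proof
          fix x assume x: "x \<in> {l. 1 \<le> l \<and> A i l \<noteq> 0}"
          then have "x \<in> ?F" using i by blast
          then have "x \<le> M0" using M0 by blast
          then show "x \<in> {1..1+M}" using x M by simp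
        qed
      qed auto
    qed
    also have "\<dots> = (\<Sum>i\<in>blk k n. \<Sum>l\<in>{1..1+k*M}. A i l * B l i)"
    proof (rule sum.cong[OF refl])
      fix i assume i: "i \<in> blk k n"
      have "M \<le> k*M" using assms(2) by simp
      show "(\<Sum>l\<in>{1..1+M}. A i l * B l i) = (\<Sum>l\<in>{1..1+k*M}. A i l * B l i)"
      proof (rule sum.mono_neutral_left)
        show "{1..1+M} \<subseteq> {1..1+k*M}" using \<open>M \<le> k*M\<close> by auto
        show "\<forall>x\<in>{1..1+k*M} - {1..1+M}. A i x * B x i = 0"
        proof
          fix x assume x: "x \<in> {1..1+k*M} - {1..1+M}"
          have "A i x = 0"
          proof (rule ccontr)
            assume "A i x \<noteq> 0"
            then have "x \<in> ?F" using i x by auto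
            then have "x \<le> M0" using M0 by blast
            then show False using x M by auto
          qed
          then show "A i x * B x i = 0" by simp
        qed
      qed simp
    qed
    also have "\<dots> = (\<Sum>i\<in>blk k n. \<Sum>m\<in>{1..Suc M}. \<Sum>l\<in>blk k m. A i l * B l i)"
      by (simp only: blk_decomp)
    also have "\<dots> = (\<Sum>m\<in>{1..Suc M}. Cb k A B n m)"
      unfolding Cb_def by (rule sum.swap)
    finally show "block_trace k (imat_mult A B) n = (\<Sum>m\<in>{1..Suc M}. Cb k A B n m)" .
  qed
  then show ?thesis by blast
qed

lemma far_ineq:
  fixes N m k :: nat
  assumes "N - 1 \<le> m - 2" shows "1 + k*(N-1) < 2 + k*(m-2)"
proof -
  have "k*(N-1) \<le> k*(m-2)" using assms by (rule mult_le_mono2)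
  then show ?thesis by linarith
qed

lemma blk_low: "m \<ge> 2 \<Longrightarrow> l \<in> blk k m \<Longrightarrow> l \<ge> 2 + k*(m-2)"
  by (auto simp: blk_def)

lemma dvd_far1:
  assumes "good k A N" "good k B N" "1 \<le> n" "n \<le> N" "N < m"
  shows "int k dvd Cb k A B n m"
proof (cases "n = 1")
  case True
  have N1: "N \<ge> 1" using assms(1) by (simp add: good_def)
  have "Cb k A B n m = (\<Sum>l\<in>blk k m. A 1 l * B l 1)"
    using True by (simp add: Cb_def blk_def)
  also have "\<dots> = 0"
  proof (rule sum.neutral, rule ballI)
    fix l assume l: "l \<in> blk k m"
    have "l \<ge> 2 + k*(m-2)" using blk_low[OF _ l] assms(5) N1 by simp
    moreover have "1 + k*(N-1) < 2 + k*(m-2)" using assms(5) by (intro far_ineq) simp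
    ultimately have "A 1 l = 0" using assms(1) unfolding good_def by auto
    then show "A 1 l * B l 1 = 0" by simp
  qed
  finally show ?thesis by simp
next
  case False
  then have n2: "n \<ge> 2" using assms(3) by simp
  have m2: "m \<ge> 2" using assms n2 by simp
  have gA: "\<forall>x y. x \<ge> 2 \<and> y \<ge> 2 \<and> \<not> block_scalar k A x y \<longrightarrow> x \<le> N \<and> y \<le> N"
    using assms(1) unfolding good_def by blast
  have gB: "\<forall>x y. x \<ge> 2 \<and> y \<ge> 2 \<and> \<not> block_scalar k B x y \<longrightarrow> x \<le> N \<and> y \<le> N"
    using assms(2) unfolding good_def by blast
  have "block_scalar k A n m"
  proof (rule ccontr)
    assume "\<not> block_scalar k A n m"
    then have "m \<le> N" using gA n2 m2 by blast
    then show False using assms(5) by simp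
  qed
  moreover have "block_scalar k B m n"
  proof (rule ccontr)
    assume "\<not> block_scalar k B m n"
    then have "m \<le> N" using gB n2 m2 by blast
    then show False using assms(5) by simp
  qed
  ultimately show ?thesis using Cb_scalar n2 m2 by blast
qed

lemma dvd_far2:
  assumes "good k A N" "good k B N" "N < n" "1 \<le> m"
  shows "int k dvd Cb k A B n m"
proof (cases "m = 1")
  case True
  have N1: "N \<ge> 1" using assms(1) by (simp add: good_def)
  have "Cb k A B n m = (\<Sum>i\<in>blk k n. A i 1 * B 1 i)"
    using True by (simp add: Cb_def blk_def)
  also have "\<dots> = 0"
  proof (rule sum.neutral, rule ballI)
    fix l assume l: "l \<in> blk k n"
    have "l \<ge> 2 + k*(n-2)" using blk_low[OF _ l] assms(3) N1 by simp
    moreover have "1 + k*(N-1) < 2 + k*(n-2)" using assms(3) by (intro far_ineq) simp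
    ultimately have "A l 1 = 0" using assms(1) unfolding good_def by auto
    then show "A l 1 * B 1 l = 0" by simp
  qed
  finally show ?thesis by simp
next
  case False
  then have m2: "m \<ge> 2" using assms(4) by simp
  have N1: "N \<ge> 1" using assms(1) by (simp add: good_def)
  have n2: "n \<ge> 2" using assms N1 by simp
  have gA: "\<forall>x y. x \<ge> 2 \<and> y \<ge> 2 \<and> \<not> block_scalar k A x y \<longrightarrow> x \<le> N \<and> y \<le> N"
    using assms(1) unfolding good_def by blast
  have gB: "\<forall>x y. x \<ge> 2 \<and> y \<ge> 2 \<and> \<not> block_scalar k B x y \<longrightarrow> x \<le> N \<and> y \<le> N"
    using assms(2) unfolding good_def by blast
  have "block_scalar k A n m"
  proof (rule ccontr)
    assume "\<not> block_scalar k A n m"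
    then have "n \<le> N" using gA n2 m2 by blast
    then show False using assms(3) by simp
  qed
  moreover have "block_scalar k B m n"
  proof (rule ccontr)
    assume "\<not> block_scalar k B m n"
    then have "n \<le> N" using gB n2 m2 by blast
    then show False using assms(3) by simp
  qed
  ultimately show ?thesis using Cb_scalar n2 m2 by blast
qed

lemma key:
  assumes k: "k \<ge> 1" and "A \<in> Rk k" and gA: "good k A N" and gB: "good k B N"
  shows "Tk k (imat_mult A B) = (\<Sum>n\<in>{1..N}. \<Sum>m\<in>{1..N}. Cb k A B n m) mod int k"
proof -
  have rc: "row_col_finite A" using assms(2) by (simp add: Rk_def)
  have "\<forall>n. \<exists>M0. \<forall>M\<ge>M0. block_trace k (imat_mult A B) n = (\<Sum>m\<in>{1..Suc M}. Cb k A B n m)"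
    using bt_expand[OF rc k] by blast
  then have "\<exists>f. \<forall>n. \<forall>M\<ge>f n. block_trace k (imat_mult A B) n = (\<Sum>m\<in>{1..Suc M}. Cb k A B n m)"
    by (rule choice)
  then obtain f where f0: "\<forall>n. \<forall>M\<ge>f n. block_trace k (imat_mult A B) n = (\<Sum>m\<in>{1..Suc M}. Cb k A B n m)"
    by blast
  have f: "block_trace k (imat_mult A B) n = (\<Sum>m\<in>{1..Suc M}. Cb k A B n m)" if "M \<ge> f n" for n M
    using f0 that by blast
  let ?bt = "block_trace k (imat_mult A B)"
  have far: "int k dvd ?bt n" if n: "n > N" for n
  proof -
    have "?bt n = (\<Sum>m\<in>{1..Suc (f n)}. Cb k A B n m)" by (rule f) simp
    moreover have "int k dvd (\<Sum>m\<in>{1..Suc (f n)}. Cb k A B n m)"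
      by (rule dvd_sum) (use dvd_far2[OF gA gB n] in auto)
    ultimately show ?thesis by simp
  qed
  have near: "int k dvd (?bt n - (\<Sum>m\<in>{1..N}. Cb k A B n m))" if n: "n \<in> {1..N}" for n
  proof -
    define M where "M = max N (f n)"
    have "?bt n = (\<Sum>m\<in>{1..Suc M}. Cb k A B n m)" by (rule f) (simp add: M_def)
    also have "{1..Suc M} = {1..N} \<union> {Suc N..Suc M}" using M_def by auto
    also have "(\<Sum>m\<in>{1..N} \<union> {Suc N..Suc M}. Cb k A B n m) =
       (\<Sum>m\<in>{1..N}. Cb k A B n m) + (\<Sum>m\<in>{Suc N..Suc M}. Cb k A B n m)"
      by (rule sum.union_disjoint) auto
    finally have e: "?bt n - (\<Sum>m\<in>{1..N}. Cb k A B n m) = (\<Sum>m\<in>{Suc N..Suc M}. Cb k A B n m)"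
      by simp
    have "int k dvd (\<Sum>m\<in>{Suc N..Suc M}. Cb k A B n m)"
      by (rule dvd_sum) (use dvd_far1[OF gA gB] n in auto)
    then show ?thesis using e by simp
  qed
  let ?S0 = "{n. n \<ge> 1 \<and> ?bt n mod int k \<noteq> 0}"
  have sub: "?S0 \<subseteq> {1..N}"
  proof
    fix n assume "n \<in> ?S0"
    then have "n \<ge> 1" "\<not> int k dvd ?bt n" by auto
    moreover have "\<not> n > N" using far[of n] \<open>\<not> int k dvd ?bt n\<close> by blast
    ultimately show "n \<in> {1..N}" by simp
  qed
  have "(\<Sum>n\<in>{1..N}. ?bt n) = (\<Sum>n\<in>?S0. ?bt n) + (\<Sum>n\<in>{1..N} - ?S0. ?bt n)"
    using sum.subset_diff[OF sub finite_atLeastAtMost] by (simp add: add.commute)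
  moreover have "int k dvd (\<Sum>n\<in>{1..N} - ?S0. ?bt n)"
    by (rule dvd_sum) auto
  moreover have "int k dvd ((\<Sum>n\<in>{1..N}. ?bt n) - (\<Sum>n\<in>{1..N}. \<Sum>m\<in>{1..N}. Cb k A B n m))"
    unfolding sum_subtractf[symmetric] by (rule dvd_sum) (use near in auto)
  ultimately have "int k dvd ((\<Sum>n\<in>?S0. ?bt n) - (\<Sum>n\<in>{1..N}. \<Sum>m\<in>{1..N}. Cb k A B n m))"
  proof -
    fix X Y Z D :: int assume "X = Y + Z" "int k dvd Z" "int k dvd (X - D)"
    then show "int k dvd (Y - D)" using dvd_diff[of "int k" "X - D" Z] by (simp add: algebra_simps)
  qed
  then show ?thesis unfolding Tk_def by (simp add: mod_eq_dvd_iff)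
qed

theorem mainTheorem6:
  fixes k :: nat and A B :: imat
  assumes "k \<ge> 1" and "A \<in> Rk k" and "B \<in> Rk k"
  shows "Tk k (imat_mult A B) = Tk k (imat_mult B A)"
proof -
  obtain NA where NA: "good k A NA" using good_ex assms by blast
  obtain NB where NB: "good k B NB" using good_ex assms by blast
  define N where "N = max NA NB"
  have gA: "good k A N" using good_mono[OF NA] N_def by simp
  have gB: "good k B N" using good_mono[OF NB] N_def by simp
  have "Tk k (imat_mult A B) = (\<Sum>n\<in>{1..N}. \<Sum>m\<in>{1..N}. Cb k A B n m) mod int k"
    using key[OF assms(1,2) gA gB] .
  also have "(\<Sum>n\<in>{1..N}. \<Sum>m\<in>{1..N}. Cb k A B n m) = (\<Sum>n\<in>{1..N}. \<Sum>m\<in>{1..N}. Cb k B A n m)"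
    by (subst sum.swap) (simp add: Cb_swap)
  also have "\<dots> mod int k = Tk k (imat_mult B A)"
    using key[OF assms(1,3) gB gA] by simp
  finally show ?thesis .
qed

end
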